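(* Consider an execution of algorithm $\mathcal{A}_2$ (described in the context) in a synchronous message-passing system of $n$ processes with authentication in which up to $t<n$ processes are Byzantine. Then at most $\lfloor \frac{n}{n-t} \rfloor$ distinct values are decided by correct processes.
   Context: Model: synchronous rounds, reliable channels between all pairs, unforgeable signatures, up to $t$ Byzantine processes; the others are correct. The decision $\bot$ counts as a decided value. Terminating Reliable Broadcast (TRB) with sender $p$: $p$ broadcasts a value $m$ and every process delivers either a value or a special value $SF$, satisfying: (Termination) every correct process delivers some value; (Validity) if the sender is correct and broadcasts $m$, every correct process delivers $m$; (Integrity) a process delivers at most once, and if it delivers $m\ne SF$ then $m$ was broadcast by the sender; (Agreement) if a correct process delivers $m$, all correct processes deliver $m$. TRB is implemented in this model in $t+1$ rounds by the classical authenticated signature-chain algorithm. Algorithm $\mathcal{A}_2$, code of $p_i$ with input $v_i$: Phase 1: $n$ instances of TRB are run, instance $q$ having $p_q$ as sender; $p_i$ broadcasts $v_i$ in its own instance and sets $L_i[p_i] := v_i$; for each process $q$, $p_i$ sets $L_i[q]$ to the value (possibly $SF$) delivered in the instance with sender $q$. Phase 2: if at least $n-t$ entries of $L_i$ equal $v_i$, decide $v_i$; else, if some value $v$ appears at least $n-t$ times in $L_i$, decide such a $v$; else decide $\bot$. *)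

theory Defs
  imports Main
begin

text \<open>Processes are 0,...,n-1. The value delivered by a TRB instance is either a
  proper value or the special value SF.\<close>
datatype 'v deliv = Val 'v | SF

datatype 'v decision = Dec 'v | Bot

definition occ :: "nat \<Rightarrow> (nat \<Rightarrow> 'v deliv) \<Rightarrow> 'v \<Rightarrow> nat" where
  "occ n Li w = card {q. q < n \<and> Li q = Val w}"

text \<open>Outcome of Phase 1 of A2: L i q is the value process i delivers in the TRB
  instance with sender q (Termination: every correct process delivers, i.e. L is total);
  the own entry of a correct process is its input; Validity for correct senders;
  Agreement among correct processes. F is the set of Byzantine processes, v the inputs.\<close>
definition A2_phase1 :: "nat \<Rightarrow> nat set \<Rightarrow> (nat \<Rightarrow> 'v) \<Rightarrow> (nat \<Rightarrow> nat \<Rightarrow> 'v deliv) \<Rightarrow> bool" where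
  "A2_phase1 n F v L \<longleftrightarrow>
     (\<forall>i<n. i \<notin> F \<longrightarrow> L i i = Val (v i)) \<and>
     (\<forall>i<n. \<forall>q<n. i \<notin> F \<longrightarrow> q \<notin> F \<longrightarrow> L i q = Val (v q)) \<and>
     (\<forall>i<n. \<forall>j<n. \<forall>q<n. i \<notin> F \<longrightarrow> j \<notin> F \<longrightarrow> L i q = L j q)"

definition A2_phase2 :: "nat \<Rightarrow> nat \<Rightarrow> 'v \<Rightarrow> (nat \<Rightarrow> 'v deliv) \<Rightarrow> 'v decision \<Rightarrow> bool" where
  "A2_phase2 n t vi Li d \<longleftrightarrow>
     (if occ n Li vi \<ge> n - t then d = Dec vi
      else if (\<exists>w. occ n Li w \<ge> n - t) then (\<exists>w. d = Dec w \<and> occ n Li w \<ge> n - t)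
      else d = Bot)"

end

theory Submission
  imports Defs
begin

lemma occ_fin:
  fixes Lc :: "nat \<Rightarrow> 'v deliv"
  assumes "t < n"
  shows "finite {w. occ n Lc w \<ge> n - t}"
proof -
  let ?W = "{w. occ n Lc w \<ge> n - t}"
  let ?S = "\<lambda>w. {q. q < n \<and> Lc q = Val w}"
  have Wsub: "?W \<subseteq> (\<lambda>q. case Lc q of Val w \<Rightarrow> w) ` {..<n}"
  proof
    fix w assume "w \<in> ?W"
    hence "card (?S w) > 0" using assms by (simp add: occ_def)
    then obtain q where "q < n" "Lc q = Val w" by (metis (mono_tags, lifting) card_gt_0_iff ex_in_conv mem_Collect_eq)
    thus "w \<in> (\<lambda>q. case Lc q of Val w \<Rightarrow> w) ` {..<n}" by force
  qed
  thus ?thesis by (rule finite_subset) simp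
qed

lemma occ_bound:
  fixes Lc :: "nat \<Rightarrow> 'v deliv"
  assumes "t < n"
  shows "card {w. occ n Lc w \<ge> n - t} \<le> n div (n - t)"
proof -
  let ?W = "{w. occ n Lc w \<ge> n - t}"
  let ?S = "\<lambda>w. {q. q < n \<and> Lc q = Val w}"
  have Wsub: "?W \<subseteq> (\<lambda>q. case Lc q of Val w \<Rightarrow> w) ` {..<n}"
  proof
    fix w assume "w \<in> ?W"
    hence "card (?S w) > 0" using assms by (simp add: occ_def)
    then obtain q where "q < n" "Lc q = Val w" by (metis (mono_tags, lifting) card_gt_0_iff ex_in_conv mem_Collect_eq)
    thus "w \<in> (\<lambda>q. case Lc q of Val w \<Rightarrow> w) ` {..<n}" by force
  qed
  hence finW: "finite ?W" by (rule finite_subset) simp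
  have "card ?W * (n - t) = (\<Sum>w\<in>?W. n - t)" by simp
  also have "\<dots> \<le> (\<Sum>w\<in>?W. card (?S w))"
    by (rule sum_mono) (simp add: occ_def)
  also have "\<dots> = card (\<Union>w\<in>?W. ?S w)"
    by (rule card_UN_disjoint[symmetric]) (use finW in auto)
  also have "\<dots> \<le> card {..<n}"
    by (rule card_mono) auto
  finally have "card ?W * (n - t) \<le> n" by simp
  thus ?thesis using assms
    by (metis div_le_mono nonzero_mult_div_cancel_right not_less0 zero_less_diff)
qed

theorem lemma10:
  fixes n t :: nat and F :: "nat set" and v :: "nat \<Rightarrow> 'v"
    and L :: "nat \<Rightarrow> nat \<Rightarrow> 'v deliv" and dec :: "nat \<Rightarrow> 'v decision"
  assumes "t < n"
    and "F \<subseteq> {..<n}" and "card F \<le> t"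
    and "A2_phase1 n F v L"
    and "\<forall>i<n. i \<notin> F \<longrightarrow> A2_phase2 n t (v i) (L i) (dec i)"
  shows "card (dec ` {i. i < n \<and> i \<notin> F}) \<le> n div (n - t)"
proof (cases "{i. i < n \<and> i \<notin> F} = {}")
  case True
  thus ?thesis unfolding True by simp
next
  case False
  then obtain i0 where i0: "i0 < n" "i0 \<notin> F" by auto
  let ?Lc = "L i0"
  have occeq: "occ n (L i) w = occ n ?Lc w" if "i < n" "i \<notin> F" for i w
  proof -
    have "{q. q < n \<and> L i q = Val w} = {q. q < n \<and> ?Lc q = Val w}"
      using assms(4) that i0 unfolding A2_phase1_def by metis
    thus ?thesis by (simp add: occ_def)
  qed
  have one: "1 \<le> n div (n - t)" using assms(1) by (metis One_nat_def Suc_leI diff_le_self div_greater_zero_iff zero_less_diff)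
  show ?thesis
  proof (cases "\<exists>w. occ n ?Lc w \<ge> n - t")
    case True
    have "dec ` {i. i < n \<and> i \<notin> F} \<subseteq> Dec ` {w. occ n ?Lc w \<ge> n - t}"
    proof
      fix d assume "d \<in> dec ` {i. i < n \<and> i \<notin> F}"
      then obtain i where i: "i < n" "i \<notin> F" "d = dec i" by auto
      have "A2_phase2 n t (v i) (L i) (dec i)" using assms(5) i by auto
      hence "\<exists>w. dec i = Dec w \<and> occ n (L i) w \<ge> n - t"
        using True occeq[OF i(1,2)] unfolding A2_phase2_def by (cases "occ n (L i) (v i) \<ge> n - t") auto
      thus "d \<in> Dec ` {w. occ n ?Lc w \<ge> n - t}"
        using i(3) occeq[OF i(1,2)] by auto
    qed
    hence "card (dec ` {i. i < n \<and> i \<notin> F}) \<le> card (Dec ` {w. occ n ?Lc w \<ge> n - t})"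
      by (rule card_mono[rotated]) (rule finite_imageI, rule occ_fin[OF assms(1)])
    also have "\<dots> \<le> card {w. occ n ?Lc w \<ge> n - t}" by (rule card_image_le) (rule occ_fin[OF assms(1)])
    also have "\<dots> \<le> n div (n - t)" by (rule occ_bound[OF assms(1)])
    finally show ?thesis .
  next
    case False
    have "dec ` {i. i < n \<and> i \<notin> F} \<subseteq> {Bot}"
    proof
      fix d assume "d \<in> dec ` {i. i < n \<and> i \<notin> F}"
      then obtain i where i: "i < n" "i \<notin> F" "d = dec i" by auto
      have "A2_phase2 n t (v i) (L i) (dec i)" using assms(5) i by auto
      moreover have "\<not> (occ n (L i) (v i) \<ge> n - t)" "\<not> (\<exists>w. occ n (L i) w \<ge> n - t)"
        using False occeq[OF i(1,2)] by auto
      ultimately show "d \<in> {Bot}" using i(3) unfolding A2_phase2_def by simp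
    qed
    hence "card (dec ` {i. i < n \<and> i \<notin> F}) \<le> card {Bot :: 'v decision}"
      by (rule card_mono[rotated]) simp
    hence "card (dec ` {i. i < n \<and> i \<notin> F}) \<le> 1" by simp
    thus ?thesis using one by linarith
  qed
qed

end
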